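(* Let $R,S$ be finite nonempty sets, $k$ a positive integer, $p_r>0$ ($r\in R$), $T=\sum_{r\in R}p_r$. Let $d_r\ge0$ ($r\in R$), not all zero, be a distribution of distances, with $\alpha=\frac{\sum_{r\in R}p_rd_r}{\sum_{r\in R}p_rd_r^2}$ and population-weighted mean $\mu_D=\frac1T\sum_{r\in R}p_rd_r$. Let $\epsilon<0$ and $\kappa=\alpha\epsilon$. Let $U\subseteq S$, $c_s\ge0$ for $s\in U$, and let $X$ be the set of $\mathbf x\in\{0,1\}^S$ with $\sum_{s\in S}x_s=k$; let $\sigma^{max}=\max_{\mathbf x\in X}\sum_{s\in U}c_sx_s$. If $\sigma^{max}\le\mu_D$, then for every $\mathbf x\in X$, \[ q=-\kappa\sum_{s\in U}c_sx_s\le|\epsilon|. \]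
   Context: $\epsilon$ is the Kolm–Pollak inequality-aversion parameter (negative for undesirable quantities like distance) and $\alpha$ its normalizing factor computed from the distribution $D=\{d_r\}$; $q$ is the argument of the exponential in the penalty term of the penalized Kolm–Pollak facility location model, where $x_s$ indicates opening a facility at $s$ and $c_s$ is a distance penalty on less desirable location $s\in U$. *)

theory Defs
  imports Complex_Main "HOL-Library.FuncSet"
begin

definition kp_alpha :: "'r set \<Rightarrow> ('r \<Rightarrow> real) \<Rightarrow> ('r \<Rightarrow> real) \<Rightarrow> real" where
  "kp_alpha R p d = (\<Sum>r\<in>R. p r * d r) / (\<Sum>r\<in>R. p r * (d r)^2)"

definition weighted_mean :: "'r set \<Rightarrow> ('r \<Rightarrow> real) \<Rightarrow> ('r \<Rightarrow> real) \<Rightarrow> real" where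
  "weighted_mean R p d = (\<Sum>r\<in>R. p r * d r) / (\<Sum>r\<in>R. p r)"

definition configs :: "'s set \<Rightarrow> nat \<Rightarrow> ('s \<Rightarrow> real) set" where
  "configs S k = {x \<in> S \<rightarrow>\<^sub>E {0, 1}. (\<Sum>s\<in>S. x s) = real k}"

end

theory Submission
  imports Defs
begin

theorem proposition5:
  fixes R :: "'r set" and S :: "'s set" and U :: "'s set"
    and k :: nat and p d :: "'r \<Rightarrow> real" and c :: "'s \<Rightarrow> real" and \<epsilon> :: real
  assumes "finite R" "R \<noteq> {}" "finite S" "S \<noteq> {}" "k > 0"
    and "\<And>r. r \<in> R \<Longrightarrow> p r > 0"
    and "\<And>r. r \<in> R \<Longrightarrow> d r \<ge> 0"
    and "\<exists>r\<in>R. d r \<noteq> 0"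
    and "\<epsilon> < 0"
    and "U \<subseteq> S"
    and "\<And>s. s \<in> U \<Longrightarrow> c s \<ge> 0"
    and "Max ((\<lambda>x. \<Sum>s\<in>U. c s * x s) ` configs S k) \<le> weighted_mean R p d"
    and "x \<in> configs S k"
  shows "- (kp_alpha R p d * \<epsilon>) * (\<Sum>s\<in>U. c s * x s) \<le> \<bar>\<epsilon>\<bar>"
proof -
  define A where "A = (\<Sum>r\<in>R. p r * d r)"
  define B where "B = (\<Sum>r\<in>R. p r * (d r)^2)"
  define T where "T = (\<Sum>r\<in>R. p r)"
  define \<sigma> where "\<sigma> = (\<Sum>s\<in>U. c s * x s)"
  have fin: "finite (configs S k)"
    by (rule finite_subset[of _ "PiE S (\<lambda>_. {0,1::real})"]) (auto simp: configs_def assms(3) finite_PiE)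
  have "\<sigma> \<le> Max ((\<lambda>x. \<Sum>s\<in>U. c s * x s) ` configs S k)"
    unfolding \<sigma>_def using fin assms(13) by auto
  hence sig: "\<sigma> \<le> A / T" using assms(12) by (simp add: weighted_mean_def A_def T_def)
  have xs: "\<And>s. s \<in> U \<Longrightarrow> x s \<ge> 0"
  proof -
    fix s assume "s \<in> U"
    hence "s \<in> S" using assms(10) by auto
    hence "x s \<in> {0,1}" using assms(13) by (auto simp: configs_def PiE_def Pi_def)
    thus "x s \<ge> 0" by auto
  qed
  have sig0: "\<sigma> \<ge> 0" unfolding \<sigma>_def using xs assms(11) by (auto intro!: sum_nonneg)
  have T0: "T > 0" unfolding T_def using assms(1,2,6) by (simp add: sum_pos)
  obtain r0 where r0: "r0 \<in> R" "d r0 \<noteq> 0" using assms(8) by auto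
  have B0: "B > 0" unfolding B_def
    using assms(1) r0 assms(6)[OF r0(1)]
    by (intro sum_pos2[of _ r0]) (auto intro!: mult_nonneg_nonneg less_imp_le[OF assms(6)])
  have A0: "A \<ge> 0" unfolding A_def using assms(6,7) by (intro sum_nonneg) (simp add: less_imp_le)
  define m where "m = A / T"
  have "0 \<le> (\<Sum>r\<in>R. p r * (d r - m)^2)" using assms(6) by (intro sum_nonneg) (simp add: less_imp_le)
  also have "\<dots> = B - 2 * m * A + m^2 * T"
    unfolding A_def B_def T_def
    by (simp add: power2_diff algebra_simps sum.distrib sum_subtractf sum_distrib_left sum_distrib_right)
  also have "\<dots> = B - A^2 / T" using T0 by (simp add: m_def field_simps power2_eq_square)
  finally have CS: "A^2 / T \<le> B" by simp
  have "A / B * \<sigma> \<le> A / B * (A / T)"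
    using sig A0 B0 by (intro mult_left_mono) auto
  also have "\<dots> = (A^2 / T) / B" by (simp add: power2_eq_square)
  also have "\<dots> \<le> 1" using CS B0 by (simp only: divide_le_eq_1) simp
  finally have key: "A / B * \<sigma> \<le> 1" .
  have "- (kp_alpha R p d * \<epsilon>) * \<sigma> = (A / B * \<sigma>) * \<bar>\<epsilon>\<bar>"
    using assms(9) by (simp add: kp_alpha_def A_def B_def)
  also have "\<dots> \<le> 1 * \<bar>\<epsilon>\<bar>" using key by (intro mult_right_mono) auto
  finally show ?thesis by (simp add: \<sigma>_def)
qed

end
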